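(* Consider the online convex optimization protocol and the algorithm AOD described in the context, with known horizon $T$, under the standing assumptions (A1)–(A3). Then for any comparator sequence $\mathbf{u}_1,\ldots,\mathbf{u}_{T+1}\in\Omega$, with path-length $P_T=\sum_{t=1}^T\|\mathbf{u}_{t+1}-\mathbf{u}_t\|_2$, \[ \sum_{t=1}^T f_t(\mathbf{w}_t)-\sum_{t=1}^T f_t(\mathbf{u}_t)\le\Big(\frac{3DG}{2}+\frac{5G}{2}\sqrt{DP_T}+\sqrt{6c(T)\Big(1+\frac{2P_T}{D}\Big)}\Big)\sqrt{T}=O\big(\sqrt{T(1+P_T)\log T}\big), \] where $c(T)=1+\ln T+\ln(1+\log_2 T)+\ln\frac{5+3\ln(1+T)}{2}$.
   Context: Online convex optimization: $\Omega\subseteq\mathbb{R}^d$ is convex; in round $t=1,\ldots,T$ the learner plays $\mathbf{w}_t\in\Omega$ and then a convex $f_t:\Omega\to\mathbb{R}$ is revealed. Standing assumptions: (A1) $\|\nabla f_t(\mathbf{w})\|_2\le G$ for all $\mathbf{w}\in\Omega$, $t\in[T]$ ($\nabla$ a (sub)gradient); (A2) $\mathbf{0}\in\Omega$ and $\max_{\mathbf{w},\mathbf{w}'\in\Omega}\|\mathbf{w}-\mathbf{w}'\|_2\le D$; (A3) $0\le f_t(\mathbf{w})\le1$ for all $\mathbf{w}\in\Omega$, $t\in[T]$. $\Pi_\Omega$ is Euclidean projection onto $\Omega$. Dense geometric covering intervals: $\mathcal{D}=\bigcup_{k\ge0,\,2^k\le T}\mathcal{D}_k$, $\mathcal{D}_k=\{I_k^i=[(i-1)2^k+1,\,i2^k]: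 i=1,2,\ldots\}$. Algorithm AOD: for each $I\in\mathcal{D}$ there is an expert $E_I$ running online gradient descent with step size $\eta_I=D/(G\sqrt{|I|})$ during the rounds $t\in I$, producing $\mathbf{w}_{t,I}\in\Omega$ for $t\in I$ (with $\mathbf{w}_{t+1,I}=\Pi_\Omega[\mathbf{w}_{t,I}-\eta_I\nabla f_t(\mathbf{w}_{t,I})]$). Its initial point $\mathbf{w}_{\min I,I}$ is arbitrary in $\Omega$ if $\min I=1$; otherwise (warm start) it is the iterate of the expert $E_J$ of the preceding interval $J=[\min I-|I|,\min I-1]\in\mathcal{D}$ after processing $f_{\min I-1}$, i.e. $\Pi_\Omega[\mathbf{w}_{\min I-1,J}-\eta_J\nabla f_{\min I-1}(\mathbf{w}_{\min I-1,J})]$. In round $t$ the active experts are $\mathcal{A}_t=\{E_I: I\in\mathcal{D}, t\in I\}$. Meta-algorithm (AdaNormalHedge): with $\Phi(R,C)=\exp([R]_+^2/(3C))$, $[x]_+=\max(0,x)$, $\Phi(0,0)=1$, $w(R,C)=\tfrac12(\Phi(R+1,C+1)-\Phi(R-1,C+1))$, $R_{t-1,I}=\sum_{u=\min I}^{t-1}(f_u(\mathbf{w}_u)-f_u(\mathbf{w}_{u,I}))$, $C_{t-1,I}=\sum_{u=\min I}^{t-1}|f_u(\mathbf{w}_u)-f_u(\mathbf{w}_{u,I})|$, weights $p_{t,I}=w(R_{t-1,I},C_{t-1,I})/\sum_{E_{I'}\in\mathcal{A}_t}w(R_{t-1,I'},C_{t-1,I'})$, and played point $\mathbf{w}_t=\sum_{E_I\in\mathcal{A}_t}p_{t,I}\mathbf{w}_{t,I}$.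 *)

theory Defs
  imports "HOL-Analysis.Analysis"
begin

(* Rounds are t = 1..T.  Interval I_k^i = [(i-1)2^k+1, i 2^k], for k with 2^k <= T and i >= 1. *)
definition intv :: "nat \<Rightarrow> nat \<Rightarrow> nat set" where
  "intv k i = {(i - 1) * 2 ^ k + 1 .. i * 2 ^ k}"

definition active :: "nat \<Rightarrow> nat \<Rightarrow> (nat \<times> nat) set" where
  "active T t = {(k, i). 2 ^ k \<le> T \<and> 1 \<le> i \<and> t \<in> intv k i}"

(* step size eta_I = D / (G sqrt |I|), |I_k^i| = 2^k *)
definition eta :: "real \<Rightarrow> real \<Rightarrow> nat \<Rightarrow> real" where
  "eta D G k = D / (G * sqrt (2 ^ k))"

definition ogd_step :: "'a::euclidean_space set \<Rightarrow> (nat \<Rightarrow> 'a \<Rightarrow> 'a) \<Rightarrow> real \<Rightarrow> real \<Rightarrow> nat \<Rightarrow> nat \<Rightarrow> 'a \<Rightarrow> 'a" where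
  "ogd_step \<Omega> g D G k t x = closest_point \<Omega> (x - eta D G k *\<^sub>R g t x)"

(* expert k i t = w_{t, I_k^i}, meaningful for t in I_k^i.  At the first round of I_k^i:
   the arbitrary initial point init k if i = 1, otherwise warm start from the expert of the
   preceding interval I_k^(i-1) after processing f_{min I - 1}. *)
primrec expert :: "'a::euclidean_space set \<Rightarrow> (nat \<Rightarrow> 'a \<Rightarrow> 'a) \<Rightarrow> real \<Rightarrow> real \<Rightarrow> (nat \<Rightarrow> 'a)
                    \<Rightarrow> nat \<Rightarrow> nat \<Rightarrow> nat \<Rightarrow> 'a" where
  "expert \<Omega> g D G init k i 0 = init k"
| "expert \<Omega> g D G init k i (Suc t) =
     (if Suc t = (i - 1) * 2 ^ k + 1
      then (if i = 1 then init k
            else ogd_step \<Omega> g D G k t (expert \<Omega> g D G init k (i - 1) t))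
      else ogd_step \<Omega> g D G k t (expert \<Omega> g D G init k i t))"

definition Phi :: "real \<Rightarrow> real \<Rightarrow> real" where
  "Phi R C = (if R = 0 \<and> C = 0 then 1 else exp ((max 0 R)\<^sup>2 / (3 * C)))"

definition wANH :: "real \<Rightarrow> real \<Rightarrow> real" where
  "wANH R C = (Phi (R + 1) (C + 1) - Phi (R - 1) (C + 1)) / 2"

(* R_{t-1,I} and C_{t-1,I} for I = I_k^i, given the learner's past plays W and expert plays E *)
definition Rsum :: "(nat \<Rightarrow> 'a \<Rightarrow> real) \<Rightarrow> (nat \<Rightarrow> 'a) \<Rightarrow> (nat \<Rightarrow> nat \<Rightarrow> nat \<Rightarrow> 'a)
                    \<Rightarrow> nat \<Rightarrow> nat \<Rightarrow> nat \<Rightarrow> real" where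
  "Rsum f W E k i t = (\<Sum>u \<in> {(i - 1) * 2 ^ k + 1 ..< t}. f u (W u) - f u (E k i u))"

definition Csum :: "(nat \<Rightarrow> 'a \<Rightarrow> real) \<Rightarrow> (nat \<Rightarrow> 'a) \<Rightarrow> (nat \<Rightarrow> nat \<Rightarrow> nat \<Rightarrow> 'a)
                    \<Rightarrow> nat \<Rightarrow> nat \<Rightarrow> nat \<Rightarrow> real" where
  "Csum f W E k i t = (\<Sum>u \<in> {(i - 1) * 2 ^ k + 1 ..< t}. \<bar>f u (W u) - f u (E k i u)\<bar>)"

(* the point played by the meta-algorithm in round t, given the past plays W (only W u, u < t, used) *)
definition meta_point :: "(nat \<Rightarrow> 'a::euclidean_space \<Rightarrow> real) \<Rightarrow> (nat \<Rightarrow> nat \<Rightarrow> nat \<Rightarrow> 'a)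
                          \<Rightarrow> nat \<Rightarrow> (nat \<Rightarrow> 'a) \<Rightarrow> nat \<Rightarrow> 'a" where
  "meta_point f E T W t =
     (let wt = (\<lambda>(k, i). wANH (Rsum f W E k i t) (Csum f W E k i t));
          Z = (\<Sum>I \<in> active T t. wt I)
      in (\<Sum>(k, i) \<in> active T t. (wt (k, i) / Z) *\<^sub>R E k i t))"

(* plays n = the learner's plays w_1..w_n (entries beyond n are junk) *)
primrec plays :: "(nat \<Rightarrow> 'a::euclidean_space \<Rightarrow> real) \<Rightarrow> (nat \<Rightarrow> nat \<Rightarrow> nat \<Rightarrow> 'a)
                   \<Rightarrow> nat \<Rightarrow> nat \<Rightarrow> nat \<Rightarrow> 'a" where
  "plays f E T 0 = (\<lambda>_. 0)"
| "plays f E T (Suc n) = (plays f E T n)(Suc n := meta_point f E T (plays f E T n) (Suc n))"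

definition aod :: "'a::euclidean_space set \<Rightarrow> (nat \<Rightarrow> 'a \<Rightarrow> real) \<Rightarrow> (nat \<Rightarrow> 'a \<Rightarrow> 'a)
                   \<Rightarrow> real \<Rightarrow> real \<Rightarrow> (nat \<Rightarrow> 'a) \<Rightarrow> nat \<Rightarrow> nat \<Rightarrow> 'a" where
  "aod \<Omega> f g D G init T t = plays f (expert \<Omega> g D G init) T t t"

definition cT :: "nat \<Rightarrow> real" where
  "cT T = 1 + ln (real T) + ln (1 + log 2 (real T)) + ln ((5 + 3 * ln (1 + real T)) / 2)"

end

theory Submission
  imports Defs "HOL-Probability.Hoeffding"
begin


lemma Phi_alt: "Phi R C = exp ((max 0 R)\<^sup>2 / (3 * C))"
  by (simp add: Phi_def)

lemma titu:
  fixes a1 a2 b1 b2 :: real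
  assumes "b1 \<ge> 0" "b2 > 0" "b1 = 0 \<Longrightarrow> a1 = 0"
  shows "(a1 + a2)\<^sup>2 / (b1 + b2) \<le> a1\<^sup>2 / b1 + a2\<^sup>2 / b2"
proof (cases "b1 = 0")
  case True then show ?thesis using assms by simp
next
  case False
  then have b1: "b1 > 0" using assms by simp
  have "(a1 + a2)\<^sup>2 * (b1 * b2) \<le> (a1\<^sup>2 * b2 + a2\<^sup>2 * b1) * (b1 + b2)"
    using sum_squares_ge_zero[of "a1*b2 - a2*b1" 0] by (simp add: power2_eq_square algebra_simps)
  then show ?thesis using b1 assms(2)
    by (simp add: field_simps)
qed

lemma sq_div_scale: "((a::real) * x)\<^sup>2 / (a * y) = a * (x\<^sup>2 / y)"
  by (cases "a = 0") (simp_all add: power2_eq_square)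

lemma conv_step:
  fixes R C l sg :: real
  assumes C: "C \<ge> 0" "\<bar>R\<bar> \<le> C" and l: "0 \<le> l" "l \<le> 1" and s: "\<bar>sg\<bar> = 1"
  shows "Phi (R + l * sg) (C + l) \<le> (1-l) * Phi R C + l * Phi (R+sg) (C+1)"
proof (cases "l = 0")
  case True thus ?thesis by simp
next
  case False
  hence l0: "l > 0" using l by simp
  define p1 where "p1 = max 0 R"
  define p2 where "p2 = max 0 (R+sg)"
  have p: "p1 \<ge> 0" "p2 \<ge> 0" by (auto simp: p1_def p2_def)
  have eq: "R + l * sg = (1-l)*R + l*(R+sg)" by algebra
  have "(1-l)*R \<le> (1-l)*p1" using l by (intro mult_left_mono) (auto simp: p1_def)
  moreover have "l*(R+sg) \<le> l*p2" using l by (intro mult_left_mono) (auto simp: p2_def)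
  moreover have "0 \<le> (1-l)*p1 + l*p2" using l p by simp
  ultimately have m: "max 0 (R + l * sg) \<le> (1-l)*p1 + l*p2" unfolding eq by simp
  have sq: "(max 0 (R + l * sg))\<^sup>2 \<le> ((1-l)*p1 + l*p2)\<^sup>2"
    by (rule power_mono[OF m]) simp
  have b0: "(1-l)*C = 0 \<Longrightarrow> (1-l)*p1 = 0"
  proof -
    assume "(1-l)*C = 0"
    then have "l = 1 \<or> C = 0" by simp
    then show "(1-l)*p1 = 0" using C by (auto simp: p1_def)
  qed
  have ti: "((1-l)*p1 + l*p2)\<^sup>2/((1-l)*C + l*(C+1)) \<le> ((1-l)*p1)\<^sup>2/((1-l)*C) + (l*p2)\<^sup>2/(l*(C+1))"
    by (rule titu) (use l l0 C b0 in auto)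
  have den: "(1-l)*C + l*(C+1) = C + l" by algebra
  have pos: "C + l > 0" using C l0 by simp
  have "(max 0 (R + l * sg))\<^sup>2 / (C + l) \<le> ((1-l)*p1 + l*p2)\<^sup>2/(C+l)"
    using sq pos by (simp add: divide_right_mono)
  also have "\<dots> \<le> (1-l)*(p1\<^sup>2/C) + l*(p2\<^sup>2/(C+1))"
    using ti unfolding den sq_div_scale .
  finally have A0: "(max 0 (R + l * sg))\<^sup>2 / (C + l) \<le> (1-l)*(p1\<^sup>2/C) + l*(p2\<^sup>2/(C+1))" .
  have e: "\<And>x y. x/(3*y) = x/y/(3::real)" by simp
  have h3: "\<And>a b c::real. a \<le> b + c \<Longrightarrow> a/3 \<le> b/3 + c/3" by linarith
  have A: "(max 0 (R + l * sg))\<^sup>2 / (3*(C + l)) \<le> (1-l)*(p1\<^sup>2/(3*C)) + l*(p2\<^sup>2/(3*(C+1)))"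
    using A0 unfolding e by (simp only: times_divide_eq_right) (rule h3)
  have "Phi (R + l * sg) (C + l) \<le> exp ((1-l)*(p1\<^sup>2/(3*C)) + l*(p2\<^sup>2/(3*(C+1))))"
    unfolding Phi_alt using A by simp
  also have "\<dots> \<le> (1-l) * exp (p1\<^sup>2/(3*C)) + l * exp (p2\<^sup>2/(3*(C+1)))"
    using convex_onD[OF exp_convex, of l "p1\<^sup>2/(3*C)" "p2\<^sup>2/(3*(C+1))"] l by simp
  finally show ?thesis unfolding Phi_alt p1_def p2_def by simp
qed

lemma exp_diff_le: "exp (b::real) - exp a \<le> exp b * (b - a)"
proof -
  have "1 + (a - b) \<le> exp (a - b)" by (rule exp_ge_add_one_self)
  hence "exp b * (1 + (a - b)) \<le> exp b * exp (a - b)" by (simp add: mult_left_mono)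
  also have "\<dots> = exp a" by (simp add: exp_diff)
  finally show ?thesis by (simp add: algebra_simps)
qed

lemma exp_third: "exp (1/3::real) \<le> 13/9"
  using exp_bound[of "1/3"] by (simp add: power2_eq_square)

lemma exp_53: "exp (5/3::real) \<le> 15/2"
proof -
  have "exp (5/3::real) = exp (1/3) ^ 5" using exp_of_nat_mult[of 5 "1/3::real"] by simp
  also have "\<dots> \<le> (13/9)^5" by (rule power_mono[OF exp_third]) simp
  also have "(13/9::real)^5 \<le> 15/2" by (simp add: power_divide)
  finally show ?thesis .
qed

lemma half_bound: "x - y \<le> q \<Longrightarrow> 1 \<le> y \<Longrightarrow> y \<le> P \<Longrightarrow> (x + 1)/2 \<le> P + q/(2::real)"
  by (simp add: field_simps)

lemma core:
  fixes R C :: real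
  assumes C: "C \<ge> 0" "\<bar>R\<bar> \<le> C"
  shows "(Phi (R+1) (C+1) + Phi (R-1) (C+1))/2 \<le> Phi R C + 5/(2*(C+1))"
proof -
  define Dd where "Dd = C + 1"
  have Dd: "Dd \<ge> 1" using C by (simp add: Dd_def)
  have RC: "R \<le> C" "-R \<le> C" using C by auto
  show ?thesis
  proof (cases "R \<le> -1")
    case True
    then have "max 0 (R+1) = 0" "max 0 (R-1) = 0" "max 0 R = 0" by auto
    then show ?thesis using C by (simp add: Phi_alt)
  next
    case nR: False
    show ?thesis
    proof (cases "R \<le> 0")
      case True
      define y where "y = (R+1)\<^sup>2/(3*Dd)"
      have y0: "0 \<le> y" using Dd by (simp add: y_def)
      have "(R+1)\<^sup>2 \<le> 1" using True nR by (intro power_le_one) auto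
      hence y1: "y \<le> 1/(3*Dd)" using Dd unfolding y_def by (simp add: divide_right_mono)
      have "1/(3*Dd) \<le> 1" using Dd by (simp add: field_simps)
      hence yl1: "y \<le> 1" using y1 by linarith
      have "exp y \<le> 1 + y + y\<^sup>2" using y0 yl1 by (intro exp_bound) auto
      also have "y\<^sup>2 \<le> y" using y0 yl1 by (simp add: power2_eq_square mult_left_le)
      finally have ey: "exp y \<le> 1 + 2*y" by simp
      have p1: "Phi (R+1) (C+1) = exp y" using nR by (simp add: Phi_alt y_def Dd_def max_def)
      have p2: "Phi (R-1) (C+1) = 1" "Phi R C = 1" using True by (simp_all add: Phi_alt max_def)
      have "1/(3*Dd) \<le> 5/(2*Dd)" using Dd by (simp add: field_simps)
      then show ?thesis unfolding p1 p2 using ey y1 by (simp add: Dd_def)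
    next
      case Rpos: False
      show ?thesis
      proof (cases "R < 1")
        case True
        define a where "a = R\<^sup>2/(3*Dd)"
        define b where "b = (R+1)\<^sup>2/(3*Dd)"
        have CR: "C > 0" using C Rpos by simp
        have pa: "exp a \<le> Phi R C"
          unfolding Phi_alt a_def Dd_def using Rpos CR
          by (simp add: max_def frac_le)
        have a0: "0 \<le> a" using Dd by (simp add: a_def)
        have p2: "Phi (R-1) (C+1) = 1" using True by (simp add: Phi_alt max_def)
        have p1: "Phi (R+1) (C+1) = exp b" using Rpos by (simp add: Phi_alt b_def Dd_def max_def)
        have ba: "b - a = (2*R+1)/(3*Dd)" using Dd by (simp add: a_def b_def field_simps power2_eq_square)
        also have "\<dots> \<le> 1/Dd" using True Dd by (simp add: field_simps)
        finally have ba1: "b - a \<le> 1/Dd" .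
        have "(R+1)*(R+1) \<le> 2*(R+1)" using True Rpos by (intro mult_right_mono) auto
        hence "(R+1)\<^sup>2 \<le> 2 * Dd" using RC unfolding Dd_def power2_eq_square by (smt (verit))
        hence "b \<le> 2/3" using Dd unfolding b_def by (simp add: field_simps)
        hence "exp b \<le> exp (2/3)" by simp
        also have "exp (2/3::real) \<le> 1 + 2/3 + (2/3)\<^sup>2" by (rule exp_bound) auto
        finally have eb: "exp b \<le> 5" by (simp add: power2_eq_square)
        have "0 \<le> (2*R+1)/(3*Dd)" using Rpos Dd by simp
        hence ab: "a \<le> b" using ba by linarith
        have "exp b - exp a \<le> exp b * (b - a)" by (rule exp_diff_le)
        also have "\<dots> \<le> 5 * (1/Dd)" using eb ba1 ab by (intro mult_mono) auto
        finally have "exp b - exp a \<le> 5/Dd" by simp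
        moreover have "1 \<le> exp a" using a0 by simp
        ultimately have "(exp b + 1)/2 \<le> Phi R C + (5/Dd)/2" using pa
          by (rule half_bound)
        moreover have "5/(2*(C+1)) = (5/Dd)/2" by (simp add: Dd_def)
        ultimately show ?thesis unfolding p1 p2 by simp
      next
        case R1: False
        have CR: "C \<ge> 1" "R \<ge> 1" using C R1 by auto
        define h where "h = 4*R/(3*Dd)"
        have h0: "h \<ge> 0" using CR Dd by (simp add: h_def)
        have H: "-h * (1/2) + ln (1 + (1/2) * (exp h - 1)) \<le> h\<^sup>2/8"
          using Hoeffdings_lemma_aux[of h "1/2"] h0 by simp
        have "ln ((1 + exp h)/2) \<le> h/2 + h\<^sup>2/8" using H by (simp add: field_simps)
        hence Hh: "(1 + exp h)/2 \<le> exp (h/2 + h\<^sup>2/8)"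
          by (metis add_pos_pos exp_gt_zero exp_le_cancel_iff exp_ln half_gt_zero zero_less_one)
        define E where "E = (R-1)\<^sup>2/(3*Dd) + h/2 + h\<^sup>2/8"
        define Y where "Y = R\<^sup>2/(3*C)"
        have pY: "Phi R C = exp Y" using CR by (simp add: Phi_alt Y_def max_def)
        have p1: "Phi (R+1) (C+1) = exp ((R-1)\<^sup>2/(3*Dd)) * exp h"
        proof -
          have "(R+1)\<^sup>2/(3*Dd) = (R-1)\<^sup>2/(3*Dd) + h"
            using Dd unfolding h_def by (simp add: field_simps power2_eq_square)
          moreover have "max 0 (R+1) = R+1" using CR by simp
          ultimately show ?thesis by (simp add: Phi_alt Dd_def exp_add)
        qed
        have p2: "Phi (R-1) (C+1) = exp ((R-1)\<^sup>2/(3*Dd))"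
          using CR by (simp add: Phi_alt Dd_def max_def)
        have M: "(Phi (R+1) (C+1) + Phi (R-1) (C+1))/2 \<le> exp E"
        proof -
          have "(Phi (R+1) (C+1) + Phi (R-1) (C+1))/2 = exp ((R-1)\<^sup>2/(3*Dd)) * ((1 + exp h)/2)"
            unfolding p1 p2 by (simp add: field_simps)
          also have "\<dots> \<le> exp ((R-1)\<^sup>2/(3*Dd)) * exp (h/2 + h\<^sup>2/8)"
            using Hh by (simp add: mult_left_mono)
          finally show ?thesis by (simp add: E_def exp_add[symmetric] add.assoc)
        qed
        have EY: "E - Y \<le> 1/(3*Dd) - R\<^sup>2/(9*Dd\<^sup>2)"
        proof -
          have E': "E = R\<^sup>2/(3*Dd) + R\<^sup>2/(3*Dd\<^sup>2) + 1/(3*Dd) - R\<^sup>2/(9*Dd\<^sup>2)"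
          proof -
            have dn: "Dd \<noteq> 0" using Dd by simp
            have a1: "(R-1)\<^sup>2/(3*Dd) + h/2 = R\<^sup>2/(3*Dd) + 1/(3*Dd)"
              unfolding h_def using dn by (simp add: field_simps power2_eq_square)
            have a2: "h\<^sup>2/8 = R\<^sup>2/(3*Dd\<^sup>2) - R\<^sup>2/(9*Dd\<^sup>2)"
              unfolding h_def using dn by (simp add: field_simps power2_eq_square)
            show ?thesis unfolding E_def using a1 a2 by linarith
          qed
          have "R\<^sup>2/(3*Dd) + R\<^sup>2/(3*Dd\<^sup>2) \<le> Y"
          proof -
            have "1/Dd + 1/Dd\<^sup>2 \<le> 1/C"
            proof -
              have pos: "C > 0" "Dd > 0" "C * Dd\<^sup>2 > 0" using CR Dd by auto
              have "(1/Dd + 1/Dd\<^sup>2) * (C * Dd\<^sup>2) = C*Dd + C" using pos by (simp add: field_simps power2_eq_square)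
              also have "\<dots> \<le> Dd\<^sup>2" unfolding Dd_def by (simp add: power2_eq_square algebra_simps)
              also have "Dd\<^sup>2 = (1/C) * (C*Dd\<^sup>2)" using pos by simp
              finally show ?thesis using mult_le_cancel_right_pos[OF pos(3)] by blast
            qed
            hence "R\<^sup>2 * (1/Dd + 1/Dd\<^sup>2) \<le> R\<^sup>2 * (1/C)" by (rule mult_left_mono) simp
            thus ?thesis by (simp add: Y_def field_simps)
          qed
          thus ?thesis unfolding E' by linarith
        qed
        show ?thesis
        proof (cases "E \<le> Y")
          case True
          have "exp E \<le> exp Y" using True by simp
          moreover have "0 \<le> 5/(2*(C+1))" using C by simp
          ultimately show ?thesis using M pY by linarith
        next
          case False
          have r9: "R\<^sup>2/(9*Dd\<^sup>2) \<ge> 0" by simp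
          have "R\<^sup>2/(9*Dd\<^sup>2) < 1/(3*Dd)" using EY False by linarith
          moreover have pos9: "9*Dd\<^sup>2 > 0" using Dd by simp
          ultimately have "R\<^sup>2 < 1/(3*Dd) * (9*Dd\<^sup>2)" using pos_divide_less_eq[OF pos9] by blast
          moreover have "1/(3*Dd) * (9*Dd\<^sup>2) = 3*Dd" using Dd by (simp add: power2_eq_square)
          ultimately have R3: "R\<^sup>2 < 3*Dd" by simp
          have "R\<^sup>2 \<le> 9/2 * C"
          proof (cases "Dd \<ge> 3")
            case True thus ?thesis using R3 by (simp add: Dd_def)
          next
            case False
            hence "R \<le> 2" using RC Dd_def by simp
            hence "R * R \<le> 2 * R" using CR by (intro mult_right_mono) auto
            hence "R * R \<le> 2 * C" using RC by linarith
            thus ?thesis using C by (simp add: power2_eq_square)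
          qed
          moreover have pos3: "3*C > 0" using CR by simp
          ultimately have Y32: "Y \<le> 3/2" unfolding Y_def using pos_divide_le_eq[OF pos3] by simp
          have d6: "1/(3*Dd) \<le> 1/6" using CR by (intro frac_le) (auto simp: Dd_def)
          have E53: "E \<le> 5/3" using EY Y32 d6 r9 by linarith
          have "exp E - exp Y \<le> exp E * (E - Y)" by (rule exp_diff_le)
          also have "\<dots> \<le> (15/2) * (1/(3*Dd))"
          proof (rule mult_mono)
            show "exp E \<le> 15/2" using E53 exp_53 by (meson exp_le_cancel_iff order_trans)
            show "E - Y \<le> 1/(3*Dd)" using EY r9 by linarith
          qed (use False Dd in auto)
          finally have "exp E - exp Y \<le> 5/(2*Dd)" by simp
          thus ?thesis using M pY by (simp add: Dd_def)
        qed
      qed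
    qed
  qed
qed

lemma pot_step:
  fixes R C r :: real
  assumes C: "C \<ge> 0" "\<bar>R\<bar> \<le> C" and r: "\<bar>r\<bar> \<le> 1"
  shows "Phi (R + r) (C + \<bar>r\<bar>) \<le> Phi R C + wANH R C * r + 5/2 * \<bar>r\<bar> / (C+1)"
proof -
  define l where "l = \<bar>r\<bar>"
  define sg where "sg = (if r \<ge> 0 then 1 else -1::real)"
  have rl: "r = l * sg" by (simp add: l_def sg_def)
  have sg: "\<bar>sg\<bar> = 1" by (simp add: sg_def)
  define M where "M = (Phi (R+1) (C+1) + Phi (R-1) (C+1))/2"
  have ps: "Phi (R+sg) (C+1) = M + sg * wANH R C"
    by (simp add: sg_def M_def wANH_def field_simps)
  have cs: "Phi (R + l* sg) (C + l) \<le> (1-l) * Phi R C + l * Phi (R+sg) (C+1)"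
    by (rule conv_step) (use C r sg in \<open>auto simp: l_def\<close>)
  define q where "q = 5/(2*(C+1))"
  have "M \<le> Phi R C + q" unfolding M_def q_def by (rule core[OF C])
  hence core': "M - Phi R C \<le> q" by linarith
  have l0: "0 \<le> l" by (simp add: l_def)
  have "l * (M - Phi R C) \<le> l * q" by (rule mult_left_mono[OF core' l0])
  hence "Phi (R + l * sg) (C + l) \<le> Phi R C + wANH R C * (l * sg) + l * q"
    using cs unfolding ps by (simp add: algebra_simps)
  hence fin: "Phi (R + r) (C + l) \<le> Phi R C + wANH R C * r + l * q" unfolding rl[symmetric] .
  have "l * q = 5/2 * \<bar>r\<bar> / (C+1)" by (simp add: l_def q_def)
  thus ?thesis using fin by (simp add: l_def)
qed

lemma harm:
  fixes x :: "nat \<Rightarrow> real"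
  assumes x: "\<And>t. 0 \<le> x t" "\<And>t. x t \<le> 1"
  shows "(\<Sum>t\<in>{1..n}. x t / (1 + (\<Sum>s\<in>{1..t-1}. x s)))
           \<le> ln (1 + (\<Sum>t\<in>{1..n}. x t)) + 2 - 2 / (1 + (\<Sum>t\<in>{1..n}. x t))"
proof (induction n)
  case 0
  then show ?case by simp
next
  case (Suc n)
  define a where "a = 1 + (\<Sum>t\<in>{1..n}. x t)"
  have a1: "a \<ge> 1" unfolding a_def using x by (simp add: sum_nonneg)
  define y where "y = x (Suc n)"
  have y: "0 \<le> y" "y \<le> 1" using x by (auto simp: y_def)
  have key: "y / a \<le> ln (a + y) - ln a + 2/a - 2/(a+y)"
  proof -
    have z: "0 \<le> y/a" "y/a \<le> 1" using y a1 by auto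
    have l1: "y/a - (y/a)\<^sup>2 \<le> ln (1 + y/a)" by (rule ln_one_plus_pos_lower_bound[OF z])
    have l2: "ln (1 + y/a) = ln (a + y) - ln a"
    proof -
      have "1 + y/a = (a+y)/a" using a1 by (simp add: field_simps)
      thus ?thesis using a1 y by (simp add: ln_div)
    qed
    have l3: "(y/a)\<^sup>2 \<le> 2/a - 2/(a+y)"
    proof -
      have "2/a - 2/(a+y) = 2*y/(a*(a+y))" using a1 y by (simp add: field_simps)
      moreover have "(y/a)\<^sup>2 \<le> y/(a*a)" using y a1 by (simp add: power2_eq_square mult_le_cancel_right1 divide_right_mono mult_left_le)
      moreover have "y/(a*a) \<le> 2*y/(a*(a+y))"
      proof -
        have "a*(a+y) \<le> 2*(a*a)" using y a1 by (simp add: algebra_simps)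
        hence "y/(a*a) = 2*y/(2*(a*a))" by simp
        also have "\<dots> \<le> 2*y/(a*(a+y))" using \<open>a*(a+y) \<le> 2*(a*a)\<close> y a1
          by (intro divide_left_mono) auto
        finally show ?thesis .
      qed
      ultimately show ?thesis by linarith
    qed
    show ?thesis using l1 l2 l3 by linarith
  qed
  have e1: "(\<Sum>t\<in>{1..Suc n}. x t) = a - 1 + y" by (simp add: a_def y_def)
  have e2: "(\<Sum>s\<in>{1..Suc n - 1}. x s) = a - 1" by (simp add: a_def)
  have "(\<Sum>t\<in>{1..Suc n}. x t / (1 + (\<Sum>s\<in>{1..t-1}. x s)))
      = (\<Sum>t\<in>{1..n}. x t / (1 + (\<Sum>s\<in>{1..t-1}. x s))) + y / a"
    using e2 by (simp add: y_def)
  also have "\<dots> \<le> ln a + 2 - 2/a + y/a" using Suc.IH by (simp add: a_def)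
  also have "\<dots> \<le> ln (a + y) + 2 - 2/(a+y)" using key by linarith
  finally show ?case unfolding e1 by simp
qed




lemma wANH_nonneg: "C \<ge> 0 \<Longrightarrow> wANH R C \<ge> 0"
proof -
  assume C: "C \<ge> 0"
  have "(max 0 (R-1))\<^sup>2 \<le> (max 0 (R+1))\<^sup>2" by (intro power_mono) auto
  hence "(max 0 (R-1))\<^sup>2 / (3*(C+1)) \<le> (max 0 (R+1))\<^sup>2 / (3*(C+1))"
    using C by (intro divide_right_mono) auto
  thus ?thesis by (simp add: wANH_def Phi_alt)
qed

lemma wANH_00: "wANH 0 0 > 0"
  by (simp add: wANH_def Phi_alt)

lemma final_arith:
  fixes s t m P D G c :: real
  assumes s1: "1 \<le> s" and st: "s \<le> t" and D: "D > 0" and G: "G > 0" and c: "c \<ge> 0" and P: "P \<ge> 0" and m0: "m \<ge> 0"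
    and hP: "s\<^sup>2 * P \<le> 2 * t\<^sup>2 * D"
    and hm: "m * s\<^sup>2 < t\<^sup>2 + s\<^sup>2"
    and hcase: "(t\<^sup>2 < 2 * s\<^sup>2 \<and> m \<le> 2) \<or> t\<^sup>2 * D < s\<^sup>2 * P"
  shows "sqrt (3 * c * m * t\<^sup>2) + m * D * G * s / 2 + G * s * P + D * G * t\<^sup>2 / (2 * s)
         \<le> (3 * D * G / 2 + 5 * G / 2 * sqrt (D * P) + sqrt (6 * c * (1 + 2 * P / D))) * t"
proof -
  have s0: "s > 0" "t > 0" using s1 st by auto
  have DP: "D * P \<ge> 0" using D P by simp
  have sq: "(sqrt (D * P))\<^sup>2 = D * P" using DP by simp
  have ii: "s * P \<le> 3/2 * sqrt (D * P) * t"
  proof (rule power2_le_imp_le)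
    have "(s * P)\<^sup>2 = (s\<^sup>2 * P) * P" by (simp add: power2_eq_square)
    also have "\<dots> \<le> (2 * t\<^sup>2 * D) * P" using hP P by (rule mult_right_mono)
    also have "\<dots> \<le> 9/4 * (D * P) * t\<^sup>2" using mult_nonneg_nonneg[OF DP zero_le_power2[of t]] by (simp add: algebra_simps)
    also have "\<dots> = (3/2)\<^sup>2 * (sqrt (D * P))\<^sup>2 * t\<^sup>2" unfolding sq by (simp add: power2_eq_square)
    also have "\<dots> = (3/2 * sqrt (D * P) * t)\<^sup>2" by (simp only: power_mult_distrib)
    finally show "(s * P)\<^sup>2 \<le> (3/2 * sqrt (D * P) * t)\<^sup>2" .
    show "0 \<le> 3/2 * sqrt (D * P) * t" using s0 DP by simp
  qed
  hence ii': "G * s * P \<le> G * (3/2 * sqrt (D * P) * t)" using G by (simp add: mult.assoc)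
  have i: "m * D * G * s / 2 + D * G * t\<^sup>2 / (2 * s) \<le> 3/2 * D * G * t + G * sqrt (D * P) * t"
    using hcase
  proof
    assume A: "t\<^sup>2 < 2 * s\<^sup>2 \<and> m \<le> 2"
    have ts: "t \<le> 2 * s"
    proof (rule ccontr)
      assume "\<not> t \<le> 2 * s"
      hence "(2* s)\<^sup>2 \<le> t\<^sup>2" using s0 by (intro power_mono) auto
      hence "4*(s* s) \<le> t*t" by (simp add: power2_eq_square)
      moreover have "t*t < 2*(s* s)" using A by (simp add: power2_eq_square)
      moreover have "s* s > 0" using s0 by simp
      ultimately show False by linarith
    qed
    have "(2* s - t) * (s - t) \<le> 0" using ts st by (simp add: mult_nonneg_nonpos)
    hence q: "2 * s\<^sup>2 + t\<^sup>2 \<le> 3 * t * s" by (simp add: algebra_simps power2_eq_square)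
    have "s + t\<^sup>2 / (2 * s) \<le> 3/2 * t"
    proof -
      have "s + t\<^sup>2 / (2 * s) = (2 * s\<^sup>2 + t\<^sup>2) / (2 * s)" using s0 by (simp add: field_simps power2_eq_square)
      also have "\<dots> \<le> (3 * t * s) / (2 * s)" using q s0 by (intro divide_right_mono) auto
      also have "\<dots> = 3/2 * t" using s0 by simp
      finally show ?thesis .
    qed
    moreover have "m * s / 2 \<le> s" using A s0 by simp
    ultimately have "m * s / 2 + t\<^sup>2 / (2 * s) \<le> 3/2 * t" by linarith
    hence "D * G * (m * s / 2 + t\<^sup>2 / (2 * s)) \<le> D * G * (3/2 * t)" using D G by (intro mult_left_mono) auto
    moreover have "0 \<le> G * sqrt (D * P) * t" using G s0 DP by simp
    ultimately show ?thesis by (simp add: algebra_simps)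
  next
    assume B: "t\<^sup>2 * D < s\<^sup>2 * P"
    have "m * s / 2 \<le> (t\<^sup>2 + s\<^sup>2) / (2 * s)"
    proof -
      have "m * s / 2 = (m * s\<^sup>2) / (2 * s)" using s0 by (simp add: power2_eq_square)
      also have "\<dots> \<le> (t\<^sup>2 + s\<^sup>2) / (2 * s)" using hm s0 by (intro divide_right_mono) auto
      finally show ?thesis .
    qed
    moreover have "(t\<^sup>2 + s\<^sup>2)/(2* s) = t\<^sup>2/(2* s) + s/2" using s0 by (simp add: field_simps power2_eq_square)
    moreover have "t\<^sup>2/s = t\<^sup>2/(2* s) + t\<^sup>2/(2* s)" by (simp add: field_simps)
    ultimately have a: "m * s / 2 + t\<^sup>2 / (2 * s) \<le> t\<^sup>2 / s + s / 2" by linarith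
    have b: "D * (t\<^sup>2 / s) \<le> sqrt (D * P) * t"
    proof (rule power2_le_imp_le)
      have "(D * (t\<^sup>2 / s))\<^sup>2 = D * (t\<^sup>2 * D) * t\<^sup>2 / s\<^sup>2" by (simp add: power2_eq_square)
      also have "\<dots> \<le> D * (s\<^sup>2 * P) * t\<^sup>2 / s\<^sup>2" using B D s0
        by (intro divide_right_mono mult_right_mono mult_left_mono) auto
      also have "\<dots> = (sqrt (D * P))\<^sup>2 * t\<^sup>2" unfolding sq using s0 by (simp add: power2_eq_square)
      also have "\<dots> = (sqrt (D * P) * t)\<^sup>2" by (simp only: power_mult_distrib)
      finally show "(D * (t\<^sup>2 / s))\<^sup>2 \<le> (sqrt (D * P) * t)\<^sup>2" .
      show "0 \<le> sqrt (D * P) * t" using s0 DP by simp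
    qed
    have "m * D * G * s / 2 + D * G * t\<^sup>2 / (2 * s) = D * G * (m * s / 2 + t\<^sup>2 / (2 * s))" by (simp add: algebra_simps)
    also have "\<dots> \<le> D * G * (t\<^sup>2 / s + s / 2)" using a D G by (intro mult_left_mono) auto
    also have "\<dots> = G * (D * (t\<^sup>2 / s)) + D * G * s / 2" by (simp add: algebra_simps)
    also have "\<dots> \<le> G * (sqrt (D * P) * t) + D * G * t / 2" using b st D G by (intro add_mono mult_left_mono divide_right_mono) auto
    also have "\<dots> \<le> 3/2 * D * G * t + G * sqrt (D * P) * t" using D G s0 by (simp add: algebra_simps)
    finally show ?thesis .
  qed
  define q where "q = P / D"
  have q0: "0 \<le> q" using P D by (simp add: q_def)
  have e24: "2 * (1 + 2 * q) = 2 + 4 * q" by simp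
  have mb0: "m \<le> 2 * (1 + 2 * q)"
    using hcase
  proof
    assume "t\<^sup>2 < 2 * s\<^sup>2 \<and> m \<le> 2"
    hence "m \<le> 2" by simp
    thus ?thesis using q0 e24 by linarith
  next
    assume B: "t\<^sup>2 * D < s\<^sup>2 * P"
    have "m * s\<^sup>2 < (q + 1) * s\<^sup>2"
    proof -
      have "t\<^sup>2 < q * s\<^sup>2" using B D by (simp add: q_def field_simps)
      thus ?thesis using hm by (simp add: algebra_simps)
    qed
    hence "m < q + 1" using s0 by simp
    thus ?thesis using q0 e24 by linarith
  qed
  have mb: "m \<le> 2 * (1 + 2 * P / D)" using mb0 by (simp add: q_def)
  have iii: "sqrt (3 * c * m * t\<^sup>2) \<le> sqrt (6 * c * (1 + 2 * P / D)) * t"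
  proof -
    have "3 * c * m \<le> 3 * c * (2 * (1 + 2 * P / D))" using mb c by (intro mult_left_mono) auto
    moreover have "3 * c * (2 * (1 + 2 * P / D)) = 6 * c * (1 + 2 * P / D)" by (simp only: mult_ac)
    ultimately have "3 * c * m \<le> 6 * c * (1 + 2 * P / D)" by (rule ord_le_eq_trans)
    hence "sqrt (3 * c * m) \<le> sqrt (6 * c * (1 + 2 * P / D))" by (rule real_sqrt_le_mono)
    moreover have "sqrt (3 * c * m * t\<^sup>2) = sqrt (3 * c * m) * t" using s0 by (simp add: real_sqrt_mult)
    ultimately show ?thesis using s0 by (simp add: mult_right_mono)
  qed
  show ?thesis using i ii' iii by (simp add: algebra_simps)
qed


locale aodl =
  fixes \<Omega> :: "'a::euclidean_space set"
    and f :: "nat \<Rightarrow> 'a \<Rightarrow> real"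
    and g :: "nat \<Rightarrow> 'a \<Rightarrow> 'a"
    and D G :: real and T :: nat
    and init :: "nat \<Rightarrow> 'a"
    and u :: "nat \<Rightarrow> 'a"
  assumes T: "T \<ge> 1"
    and DG: "D > 0" "G > 0"
    and cvx: "convex \<Omega>" and cl: "closed \<Omega>"
    and zero: "0 \<in> \<Omega>"
    and diam: "\<forall>w\<in>\<Omega>. \<forall>w'\<in>\<Omega>. norm (w - w') \<le> D"
    and fconv: "\<forall>t\<in>{1..T}. convex_on \<Omega> (f t)"
    and subgrad: "\<forall>t\<in>{1..T}. \<forall>w\<in>\<Omega>. \<forall>v\<in>\<Omega>. f t v \<ge> f t w + g t w \<bullet> (v - w)"
    and gbound: "\<forall>t\<in>{1..T}. \<forall>w\<in>\<Omega>. norm (g t w) \<le> G"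
    and frange: "\<forall>t\<in>{1..T}. \<forall>w\<in>\<Omega>. 0 \<le> f t w \<and> f t w \<le> 1"
    and init: "\<forall>k. init k \<in> \<Omega>"
    and u: "\<forall>t\<in>{1..T+1}. u t \<in> \<Omega>"
begin

abbreviation "E \<equiv> expert \<Omega> g D G init"
abbreviation "W t \<equiv> aod \<Omega> f g D G init T t"
abbreviation "PL \<equiv> plays f E T"

lemma ne: "\<Omega> \<noteq> {}" using zero by auto

lemma ogd_in: "ogd_step \<Omega> g D G k t x \<in> \<Omega>"
  by (simp add: ogd_step_def closest_point_in_set[OF cl ne])

lemma E_in: "E k i t \<in> \<Omega>"
  by (induction t arbitrary: i) (auto simp: ogd_in init)

lemma plays_stable: "1 \<le> v \<Longrightarrow> v \<le> n \<Longrightarrow> PL n v = W v"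
proof (induction n)
  case 0 then show ?case by simp
next
  case (Suc n)
  show ?case
  proof (cases "v = Suc n")
    case True then show ?thesis by (simp add: aod_def)
  next
    case False then show ?thesis using Suc by simp
  qed
qed

lemma W_meta: "1 \<le> t \<Longrightarrow> W t = meta_point f E T (PL (t-1)) t"
  by (cases t) (auto simp: aod_def)

definition S :: "(nat \<times> nat) set" where "S = {k. 2^k \<le> T} \<times> {1..T}"

lemma finS: "finite S"
proof -
  have "{k. 2^k \<le> T} \<subseteq> {..<T}"
  proof
    fix k assume "k \<in> {k. 2^k \<le> T}"
    hence a: "2^k \<le> T" by simp
    have "k < 2^k" by (rule less_exp)
    hence "k < T" using a by linarith
    thus "k \<in> {..<T}" by simp
  qed
  thus ?thesis unfolding S_def by (auto intro: finite_subset)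
qed

lemma active_sub: "t \<le> T \<Longrightarrow> active T t \<subseteq> S"
proof
  fix I assume t: "t \<le> T" and I: "I \<in> active T t"
  obtain k i where Ieq: "I = (k,i)" by force
  have "2^k \<le> T" "1 \<le> i" "t \<in> intv k i" using I by (auto simp: active_def Ieq)
  moreover have "i \<le> T"
  proof -
    have "(i - 1) * 2^k + 1 \<le> t" using \<open>t \<in> intv k i\<close> by (simp add: intv_def)
    moreover have "i - 1 \<le> (i-1) * 2^k" by simp
    ultimately show ?thesis using t \<open>1 \<le> i\<close> by linarith
  qed
  ultimately show "I \<in> S" by (simp add: S_def Ieq)
qed

lemma active_fin: "t \<le> T \<Longrightarrow> finite (active T t)"
  using active_sub finS finite_subset by blast

lemma active0: "1 \<le> t \<Longrightarrow> t \<le> T \<Longrightarrow> (0, t) \<in> active T t"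
  using T by (simp add: active_def intv_def)

definition rr :: "nat \<times> nat \<Rightarrow> nat \<Rightarrow> real" where
  "rr I t = (if t \<in> intv (fst I) (snd I) then f t (W t) - f t (E (fst I) (snd I) t) else 0)"
definition "RR I n = (\<Sum>t\<in>{1..n}. rr I t)"
definition "CC I n = (\<Sum>t\<in>{1..n}. \<bar>rr I t\<bar>)"

lemma sum_active_eq:
  assumes t: "t \<in> {1..T}" and I: "I \<in> active T t"
  shows "Rsum f (PL (t-1)) E (fst I) (snd I) t = RR I (t-1)"
    and "Csum f (PL (t-1)) E (fst I) (snd I) t = CC I (t-1)"
proof -
  obtain k i where Ieq: "I = (k,i)" by force
  have ki: "2^k \<le> T" "1 \<le> i" "(i-1)*2^k + 1 \<le> t" "t \<le> i*2^k"
    using I by (auto simp: active_def Ieq intv_def)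
  have set: "{1..t-1} \<inter> intv k i = {(i-1)*2^k+1..<t}"
    using ki t by (auto simp: intv_def)
  have pl: "\<And>v. v \<in> {(i-1)*2^k+1..<t} \<Longrightarrow> PL (t-1) v = W v"
    by (rule plays_stable) auto
  have "RR I (t-1) = (\<Sum>v\<in>{1..t-1} \<inter> intv k i. f v (W v) - f v (E k i v))"
    unfolding RR_def rr_def Ieq by (simp add: sum.inter_restrict[symmetric] if_distrib)
  also have "\<dots> = Rsum f (PL (t-1)) E k i t"
    unfolding set Rsum_def using pl by (intro sum.cong) auto
  finally show "Rsum f (PL (t-1)) E (fst I) (snd I) t = RR I (t-1)" by (simp add: Ieq)
  have ab: "\<And>v. \<bar>rr I v\<bar> = (if v \<in> intv k i then \<bar>f v (W v) - f v (E k i v)\<bar> else 0)"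
    by (simp add: rr_def Ieq)
  have "CC I (t-1) = (\<Sum>v\<in>{1..t-1} \<inter> intv k i. \<bar>f v (W v) - f v (E k i v)\<bar>)"
    unfolding CC_def ab by (simp add: sum.inter_restrict[symmetric])
  also have "\<dots> = Csum f (PL (t-1)) E k i t"
    unfolding set Csum_def using pl by (intro sum.cong) auto
  finally show "Csum f (PL (t-1)) E (fst I) (snd I) t = CC I (t-1)" by (simp add: Ieq)
qed

lemma meta_facts:
  assumes t: "t \<in> {1..T}"
  shows "W t \<in> \<Omega>"
    and "(\<Sum>I\<in>S. wANH (RR I (t-1)) (CC I (t-1)) * rr I t) \<le> 0"
proof -
  define A where "A = active T t"
  define wt where "wt = (\<lambda>I. wANH (Rsum f (PL (t-1)) E (fst I) (snd I) t) (Csum f (PL (t-1)) E (fst I) (snd I) t))"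
  define Z where "Z = (\<Sum>I\<in>A. wt I)"
  have finA: "finite A" using active_fin t by (simp add: A_def)
  have wt0: "\<And>I. wt I \<ge> 0" unfolding wt_def by (rule wANH_nonneg) (simp add: Csum_def sum_nonneg)
  have t0: "(0,t) \<in> A" using active0 t by (simp add: A_def)
  have "wt (0,t) = wANH 0 0" by (simp add: wt_def Rsum_def Csum_def)
  hence "wt (0,t) > 0" using wANH_00 by simp
  hence Zpos: "Z > 0" unfolding Z_def using finA t0 wt0
    by (metis member_le_sum order_less_le_trans)
  have Wt: "W t = (\<Sum>I\<in>A. (wt I / Z) *\<^sub>R E (fst I) (snd I) t)"
    using t by (simp add: W_meta meta_point_def A_def wt_def Z_def Let_def case_prod_beta)
  have sum1: "(\<Sum>I\<in>A. wt I / Z) = 1" using Zpos by (simp add: Z_def sum_divide_distrib[symmetric])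
  have wZ: "\<And>I. 0 \<le> wt I / Z" using wt0 Zpos by simp
  show Win: "W t \<in> \<Omega>" unfolding Wt
    by (rule convex_sum[OF finA cvx sum1]) (auto simp: wZ E_in)
  have jen: "f t (W t) \<le> (\<Sum>I\<in>A. (wt I / Z) * f t (E (fst I) (snd I) t))"
    unfolding Wt
    by (rule convex_on_sum[OF finA]) (use t0 fconv t sum1 wZ E_in in auto)
  have "(\<Sum>I\<in>S. wANH (RR I (t-1)) (CC I (t-1)) * rr I t)
      = (\<Sum>I\<in>A. wt I * (f t (W t) - f t (E (fst I) (snd I) t)))"
  proof (rule sum.mono_neutral_cong_right)
    show "finite S" by (rule finS)
    show "A \<subseteq> S" using active_sub t by (simp add: A_def)
    show "\<forall>I\<in>S - A. wANH (RR I (t-1)) (CC I (t-1)) * rr I t = 0"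
    proof
      fix I assume "I \<in> S - A"
      hence "t \<notin> intv (fst I) (snd I)" by (auto simp: S_def A_def active_def)
      thus "wANH (RR I (t-1)) (CC I (t-1)) * rr I t = 0" by (simp add: rr_def)
    qed
    show "\<And>I. I \<in> A \<Longrightarrow> wANH (RR I (t-1)) (CC I (t-1)) * rr I t = wt I * (f t (W t) - f t (E (fst I) (snd I) t))"
    proof -
      fix I assume I: "I \<in> A"
      hence "t \<in> intv (fst I) (snd I)" by (auto simp: A_def active_def)
      thus "wANH (RR I (t-1)) (CC I (t-1)) * rr I t = wt I * (f t (W t) - f t (E (fst I) (snd I) t))"
        using sum_active_eq[OF t, of I] I by (simp add: rr_def wt_def A_def)
    qed
  qed
  also have "\<dots> = Z * f t (W t) - (\<Sum>I\<in>A. wt I * f t (E (fst I) (snd I) t))"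
    by (simp add: Z_def algebra_simps sum_subtractf sum_distrib_right)
  also have "(\<Sum>I\<in>A. wt I * f t (E (fst I) (snd I) t)) = Z * (\<Sum>I\<in>A. (wt I / Z) * f t (E (fst I) (snd I) t))"
    using Zpos by (simp add: sum_distrib_left)
  also have "Z * f t (W t) - \<dots> \<le> 0" using jen Zpos by (simp add: mult_left_mono)
  finally show "(\<Sum>I\<in>S. wANH (RR I (t-1)) (CC I (t-1)) * rr I t) \<le> 0" .
qed

lemma rr_bound: "t \<in> {1..T} \<Longrightarrow> \<bar>rr I t\<bar> \<le> 1"
proof -
  assume t: "t \<in> {1..T}"
  have W: "W t \<in> \<Omega>" by (rule meta_facts(1)[OF t])
  have a: "0 \<le> f t (W t)" "f t (W t) \<le> 1" "0 \<le> f t (E (fst I) (snd I) t)" "f t (E (fst I) (snd I) t) \<le> 1"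
    using frange t W E_in[of "fst I" "snd I" t] by auto
  show ?thesis unfolding rr_def using a by auto
qed


lemma RR_Suc: "RR I (Suc n) = RR I n + rr I (Suc n)" and CC_Suc: "CC I (Suc n) = CC I n + \<bar>rr I (Suc n)\<bar>"
  by (simp_all add: RR_def CC_def)

lemma CC_nonneg: "CC I n \<ge> 0" by (simp add: CC_def sum_nonneg)
lemma abs_RR: "\<bar>RR I n\<bar> \<le> CC I n" unfolding RR_def CC_def by (rule sum_abs)

lemma potential:
  "n \<le> T \<Longrightarrow> (\<Sum>I\<in>S. Phi (RR I n) (CC I n))
      \<le> (\<Sum>I\<in>S. 1 + 5/2 * (\<Sum>t\<in>{1..n}. \<bar>rr I t\<bar> / (CC I (t-1) + 1)))"
proof (induction n)
  case 0
  then show ?case by (simp add: RR_def CC_def Phi_alt)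
next
  case (Suc n)
  have t: "Suc n \<in> {1..T}" using Suc.prems by simp
  have step: "Phi (RR I (Suc n)) (CC I (Suc n)) \<le> Phi (RR I n) (CC I n)
      + wANH (RR I n) (CC I n) * rr I (Suc n) + 5/2 * \<bar>rr I (Suc n)\<bar> / (CC I n + 1)" for I
    unfolding RR_Suc CC_Suc by (rule pot_step[OF CC_nonneg abs_RR rr_bound[OF t]])
  have "(\<Sum>I\<in>S. Phi (RR I (Suc n)) (CC I (Suc n)))
     \<le> (\<Sum>I\<in>S. Phi (RR I n) (CC I n) + wANH (RR I n) (CC I n) * rr I (Suc n) + 5/2 * \<bar>rr I (Suc n)\<bar> / (CC I n + 1))"
    by (rule sum_mono) (rule step)
  also have "\<dots> = (\<Sum>I\<in>S. Phi (RR I n) (CC I n)) + (\<Sum>I\<in>S. wANH (RR I n) (CC I n) * rr I (Suc n))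
      + (\<Sum>I\<in>S. 5/2 * \<bar>rr I (Suc n)\<bar> / (CC I n + 1))"
    by (simp add: sum.distrib)
  also have "(\<Sum>I\<in>S. wANH (RR I n) (CC I n) * rr I (Suc n)) \<le> 0"
    using meta_facts(2)[OF t] by simp
  also have "(\<Sum>I\<in>S. Phi (RR I n) (CC I n)) \<le> (\<Sum>I\<in>S. 1 + 5/2 * (\<Sum>t\<in>{1..n}. \<bar>rr I t\<bar> / (CC I (t-1) + 1)))"
    using Suc by simp
  finally have "(\<Sum>I\<in>S. Phi (RR I (Suc n)) (CC I (Suc n)))
     \<le> (\<Sum>I\<in>S. 1 + 5/2 * (\<Sum>t\<in>{1..n}. \<bar>rr I t\<bar> / (CC I (t-1) + 1))) + (\<Sum>I\<in>S. 5/2 * \<bar>rr I (Suc n)\<bar> / (CC I n + 1))"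
    by simp
  also have "\<dots> = (\<Sum>I\<in>S. 1 + 5/2 * (\<Sum>t\<in>{1..Suc n}. \<bar>rr I t\<bar> / (CC I (t-1) + 1)))"
    by (simp add: sum.distrib[symmetric] algebra_simps)
  finally show ?case .
qed

lemma harm_rr: "n \<le> T \<Longrightarrow> (\<Sum>t\<in>{1..n}. \<bar>rr I t\<bar> / (CC I (t-1) + 1)) \<le> ln (1 + CC I n) + 2"
proof -
  assume n: "n \<le> T"
  define x where "x t = (if 1 \<le> t \<and> t \<le> T then \<bar>rr I t\<bar> else 0)" for t
  have x: "\<And>t. 0 \<le> x t" "\<And>t. x t \<le> 1" using rr_bound by (auto simp: x_def)
  have h: "(\<Sum>t\<in>{1..n}. x t / (1 + (\<Sum>s\<in>{1..t-1}. x s)))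
           \<le> ln (1 + (\<Sum>t\<in>{1..n}. x t)) + 2 - 2 / (1 + (\<Sum>t\<in>{1..n}. x t))"
    by (rule harm[OF x])
  have e1: "(\<Sum>t\<in>{1..n}. x t) = CC I n" unfolding CC_def x_def using n by (intro sum.cong) auto
  have e2: "(\<Sum>t\<in>{1..n}. x t / (1 + (\<Sum>s\<in>{1..t-1}. x s))) = (\<Sum>t\<in>{1..n}. \<bar>rr I t\<bar> / (CC I (t-1) + 1))"
  proof (rule sum.cong)
    fix t assume t: "t \<in> {1..n}"
    have "(\<Sum>s\<in>{1..t-1}. x s) = CC I (t-1)" unfolding CC_def x_def using t n by (intro sum.cong) auto
    thus "x t / (1 + (\<Sum>s\<in>{1..t-1}. x s)) = \<bar>rr I t\<bar> / (CC I (t-1) + 1)" using t n by (simp add: x_def add.commute)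
  qed simp
  have "0 \<le> 2 / (1 + CC I n)" using CC_nonneg by simp
  thus ?thesis using h unfolding e1 e2 by linarith
qed

lemma CC_le: "n \<le> T \<Longrightarrow> CC I n \<le> n"
proof -
  assume n: "n \<le> T"
  have "CC I n \<le> (\<Sum>t\<in>{1..n}. (1::real))" unfolding CC_def using n rr_bound by (intro sum_mono) auto
  thus ?thesis by simp
qed

lemma cardS: "real (card S) \<le> (1 + log 2 T) * T"
proof -
  define N where "N = nat \<lfloor>log 2 T\<rfloor>"
  have lg: "log 2 T \<ge> 0" using T by simp
  have sub: "{k. 2^k \<le> T} \<subseteq> {..N}"
  proof
    fix k assume "k \<in> {k. 2^k \<le> T}"
    hence "real (2^k) \<le> real T" by simp
    hence "log 2 (2^k) \<le> log 2 T" by (subst log_le_cancel_iff) (use T in auto)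
    hence "real k \<le> log 2 T" by (simp add: log_nat_power)
    hence "k \<le> N" unfolding N_def by (metis le_nat_floor floor_of_nat le_floor_iff)
    thus "k \<in> {..N}" by simp
  qed
  have "card {k. 2^k \<le> T} \<le> card {..N}" by (rule card_mono[OF _ sub]) simp
  hence c1: "real (card {k. 2^k \<le> T}) \<le> real N + 1" by simp
  have "real N \<le> log 2 T" unfolding N_def using lg by linarith
  hence c2: "real (card {k. 2^k \<le> T}) \<le> 1 + log 2 T" using c1 by linarith
  have "card S = card {k. 2^k \<le> T} * T" by (simp add: S_def card_cartesian_product)
  hence "real (card S) = real (card {k. 2^k \<le> T}) * T" by simp
  also have "\<dots> \<le> (1 + log 2 T) * T" using c2 by (intro mult_right_mono) auto
  finally show ?thesis .
qed

lemma cT_nonneg: "cT T \<ge> 0"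
proof -
  have "ln (real T) \<ge> 0" using T by simp
  moreover have "ln (1 + log 2 T) \<ge> 0" using T by simp
  moreover have "ln ((5 + 3 * ln (1 + real T)) / 2) \<ge> 0" using T by simp
  ultimately show ?thesis by (simp add: cT_def)
qed

lemma expc: "real (card S) * (6 + 5/2 * ln (1 + real T)) \<le> exp (cT T)"
proof -
  define l where "l = ln (1 + real T)"
  have l0: "l \<ge> 0" using T by (simp add: l_def)
  have lg: "log 2 T \<ge> 0" using T by simp
  have p1: "1 + log 2 (real T) > 0" using lg by simp
  have q: "0 \<le> ln (1 + real T)" by simp
  have p2: "(5 + 3 * ln (1 + real T))/2 > 0" using q by (intro divide_pos_pos add_pos_nonneg) auto
  have p3: "real T > 0" using T by simp
  have e: "exp (cT T) = exp 1 * T * (1 + log 2 T) * ((5 + 3 * l)/2)"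
    unfolding cT_def exp_add l_def using exp_ln[OF p1] exp_ln[OF p2] exp_ln[OF p3] by simp
  have e25: "exp (1::real) \<ge> 5/2" using exp_lower_Taylor_quadratic[of 1] by simp
  have "6 + 5/2 * l \<le> 5/2 * ((5 + 3 * l)/2)" using l0 by simp
  also have "\<dots> \<le> exp 1 * ((5 + 3 * l)/2)" using e25 l0 by (intro mult_right_mono) auto
  finally have a: "6 + 5/2 * l \<le> exp 1 * ((5 + 3 * l)/2)" .
  have "real (card S) * (6 + 5/2 * l) \<le> ((1 + log 2 T) * T) * (exp 1 * ((5 + 3 * l)/2))"
    using cardS a l0 by (intro mult_mono) auto
  also have "\<dots> = exp (cT T)" unfolding e by (simp only: mult_ac)
  finally show ?thesis by (simp add: l_def)
qed

lemma CC_card: "CC I T \<le> card (intv (fst I) (snd I) \<inter> {1..T})"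
proof -
  have ab: "\<And>v. \<bar>rr I v\<bar> = (if v \<in> intv (fst I) (snd I) then \<bar>rr I v\<bar> else 0)"
    by (simp add: rr_def)
  have "CC I T = (\<Sum>t\<in>{1..T} \<inter> intv (fst I) (snd I). \<bar>rr I t\<bar>)"
    unfolding CC_def by (subst ab) (simp add: sum.inter_restrict[symmetric])
  also have "\<dots> \<le> (\<Sum>t\<in>{1..T} \<inter> intv (fst I) (snd I). 1)" using rr_bound by (intro sum_mono) auto
  finally show ?thesis by (simp add: Int_commute)
qed

lemma meta_bound: "I \<in> S \<Longrightarrow> RR I T \<le> sqrt (3 * card (intv (fst I) (snd I) \<inter> {1..T}) * cT T)"
proof -
  assume I: "I \<in> S"
  show ?thesis
  proof (cases "RR I T \<le> 0")
    case True
    then show ?thesis by (meson order_trans real_sqrt_ge_zero cT_nonneg mult_nonneg_nonneg of_nat_0_le_iff zero_le_numeral)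
  next
    case False
    hence R0: "RR I T > 0" by simp
    hence C0: "CC I T > 0" using abs_RR[of I T] by linarith
    have "Phi (RR I T) (CC I T) \<le> (\<Sum>J\<in>S. Phi (RR J T) (CC J T))"
      by (rule member_le_sum[OF I _ finS]) (simp add: Phi_alt)
    also have "\<dots> \<le> (\<Sum>J\<in>S. 1 + 5/2 * (\<Sum>t\<in>{1..T}. \<bar>rr J t\<bar> / (CC J (t-1) + 1)))"
      by (rule potential) simp
    also have "\<dots> \<le> (\<Sum>J\<in>S. 6 + 5/2 * ln (1 + real T))"
    proof (rule sum_mono)
      fix J assume "J \<in> S"
      have "ln (1 + CC J T) \<le> ln (1 + real T)" using CC_le[of T J] CC_nonneg[of J T] by simp
      thus "1 + 5/2 * (\<Sum>t\<in>{1..T}. \<bar>rr J t\<bar> / (CC J (t-1) + 1)) \<le> 6 + 5/2 * ln (1 + real T)"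
        using harm_rr[of T J] by simp
    qed
    also have "\<dots> = real (card S) * (6 + 5/2 * ln (1 + real T))" by simp
    also have "\<dots> \<le> exp (cT T)" by (rule expc)
    finally have "exp ((RR I T)\<^sup>2 / (3 * CC I T)) \<le> exp (cT T)" using R0 by (simp add: Phi_alt)
    hence "(RR I T)\<^sup>2 / (3 * CC I T) \<le> cT T" by simp
    hence "(RR I T)\<^sup>2 \<le> 3 * CC I T * cT T" using C0 by (simp add: divide_le_eq ac_simps)
    also have "\<dots> \<le> 3 * card (intv (fst I) (snd I) \<inter> {1..T}) * cT T"
      using CC_card[of I] cT_nonneg by (intro mult_right_mono) auto
    finally show ?thesis by (rule real_le_rsqrt)
  qed
qed


lemma eta_pos: "eta D G k > 0" using DG by (simp add: eta_def)

lemma sqdiff: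
  assumes "y \<in> \<Omega>" "b \<in> \<Omega>" "c \<in> \<Omega>"
  shows "(norm (y - c))\<^sup>2 - (norm (y - b))\<^sup>2 \<le> 2 * D * norm (c - b)"
proof -
  define p where "p = norm (y - c)"
  define q where "q = norm (y - b)"
  define d where "d = norm (c - b)"
  have pq: "p \<le> D" "q \<le> D" "0 \<le> p" "0 \<le> q" "0 \<le> d" using diam assms by (auto simp: p_def q_def d_def)
  have tri: "p - q \<le> d"
  proof -
    have "y - c = (y - b) - (c - b)" by simp
    hence "norm (y - c) \<le> norm (y - b) + norm (c - b)" by (metis norm_triangle_ineq4)
    thus ?thesis by (simp add: p_def q_def d_def)
  qed
  show ?thesis
  proof (cases "p \<le> q")
    case True
    hence "p\<^sup>2 \<le> q\<^sup>2" using pq by (intro power_mono) auto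
    moreover have "0 \<le> 2 * D * d" using DG pq by simp
    ultimately show ?thesis unfolding p_def q_def d_def by linarith
  next
    case False
    have "p\<^sup>2 - q\<^sup>2 = (p - q) * (p + q)" by (simp add: power2_eq_square algebra_simps)
    also have "\<dots> \<le> d * (2 * D)" using False tri pq by (intro mult_mono) auto
    finally show ?thesis unfolding p_def q_def d_def by (simp add: algebra_simps)
  qed
qed

lemma norm_step_sq: "(norm (a - e *\<^sub>R v - b))\<^sup>2 = (norm (a - b))\<^sup>2 - 2 * e * (v \<bullet> (a - b)) + e\<^sup>2 * (norm v)\<^sup>2"
proof -
  have eq: "a - e *\<^sub>R v - b = (a - b) - e *\<^sub>R v" by simp
  have h: "(norm (w - e *\<^sub>R v))\<^sup>2 = (norm w)\<^sup>2 - 2 * e * (v \<bullet> w) + e\<^sup>2 * (norm v)\<^sup>2" for w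
    unfolding power2_norm_eq_inner by (simp add: inner_diff_left inner_diff_right inner_commute algebra_simps power2_eq_square)
  show ?thesis unfolding eq by (rule h)
qed

lemma ogd_inv:
  fixes x :: "nat \<Rightarrow> 'a"
  assumes s: "1 \<le> s" "s + n \<le> T + 1"
    and xs: "\<And>t. t \<in> {s..<s+n} \<Longrightarrow> x (Suc t) = ogd_step \<Omega> g D G k t (x t)"
    and xin: "\<And>t. x t \<in> \<Omega>"
  shows "(\<Sum>t\<in>{s..<s+n}. g t (x t) \<bullet> (x t - u t))
     \<le> ((norm (x s - u s))\<^sup>2 - (norm (x (s+n) - u (s+n)))\<^sup>2) / (2 * eta D G k)
        + (D / eta D G k) * (\<Sum>t\<in>{s..<s+n}. norm (u (Suc t) - u t))
        + eta D G k / 2 * (\<Sum>t\<in>{s..<s+n}. (norm (g t (x t)))\<^sup>2)"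
  using s xs
proof (induction n)
  case 0
  then show ?case by simp
next
  case (Suc n)
  define e where "e = eta D G k"
  have e0: "e > 0" using eta_pos by (simp add: e_def)
  define t where "t = s + n"
  have tT: "t \<in> {1..T}" using Suc.prems by (simp add: t_def)
  have IH: "(\<Sum>t\<in>{s..<s+n}. g t (x t) \<bullet> (x t - u t))
     \<le> ((norm (x s - u s))\<^sup>2 - (norm (x (s+n) - u (s+n)))\<^sup>2) / (2 * e)
        + (D / e) * (\<Sum>t\<in>{s..<s+n}. norm (u (Suc t) - u t))
        + e / 2 * (\<Sum>t\<in>{s..<s+n}. (norm (g t (x t)))\<^sup>2)"
    using Suc by (simp add: e_def)
  define a where "a = x t"
  define gt where "gt = g t a"
  define b where "b = u t"
  define c where "c = u (Suc t)"
  have bc: "b \<in> \<Omega>" "c \<in> \<Omega>" using u tT by (auto simp: b_def c_def)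
  have y: "x (Suc t) = closest_point \<Omega> (a - e *\<^sub>R gt)"
    using Suc.prems(3)[of t] by (simp add: t_def ogd_step_def a_def gt_def e_def)
  have "dist (closest_point \<Omega> (a - e *\<^sub>R gt)) (closest_point \<Omega> b) \<le> dist (a - e *\<^sub>R gt) b"
    by (rule closest_point_lipschitz[OF cvx cl ne])
  hence n1: "norm (x (Suc t) - b) \<le> norm (a - e *\<^sub>R gt - b)"
    using closest_point_self[OF bc(1)] y by (simp add: dist_norm)
  hence n2: "(norm (x (Suc t) - b))\<^sup>2 \<le> (norm (a - e *\<^sub>R gt - b))\<^sup>2"
    by (intro power_mono) auto
  have n3: "(norm (x (Suc t) - c))\<^sup>2 - (norm (x (Suc t) - b))\<^sup>2 \<le> 2 * D * norm (c - b)"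
    by (rule sqdiff[OF xin bc(1) bc(2)])
  have key: "2 * e * (gt \<bullet> (a - b)) \<le> (norm (a - b))\<^sup>2 - (norm (x (Suc t) - c))\<^sup>2 + 2 * D * norm (c - b) + e\<^sup>2 * (norm gt)\<^sup>2"
    using n2 n3 unfolding norm_step_sq by linarith
  have key2: "gt \<bullet> (a - b) \<le> ((norm (a - b))\<^sup>2 - (norm (x (Suc t) - c))\<^sup>2) / (2 * e) + (D / e) * norm (c - b) + e / 2 * (norm gt)\<^sup>2"
  proof -
    have "gt \<bullet> (a - b) = (2 * e * (gt \<bullet> (a - b))) / (2 * e)" using e0 by simp
    also have "\<dots> \<le> ((norm (a - b))\<^sup>2 - (norm (x (Suc t) - c))\<^sup>2 + 2 * D * norm (c - b) + e\<^sup>2 * (norm gt)\<^sup>2) / (2 * e)"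
      using key e0 by (intro divide_right_mono) auto
    also have "\<dots> = ((norm (a - b))\<^sup>2 - (norm (x (Suc t) - c))\<^sup>2) / (2 * e) + (D / e) * norm (c - b) + e / 2 * (norm gt)\<^sup>2"
      using e0 by (simp add: field_simps power2_eq_square)
    finally show ?thesis .
  qed
  have st: "{s..<s + Suc n} = insert t {s..<s+n}" and tn: "t \<notin> {s..<s+n}" by (auto simp: t_def)
  show ?case
    unfolding st sum.insert[OF finite_atLeastLessThan tn]
    using IH key2 by (simp add: a_def b_def c_def gt_def t_def e_def algebra_simps add_divide_distrib diff_divide_distrib)
qed


lemma expert_regret:
  assumes k: "2^k \<le> T" and i: "1 \<le> i" and Ane: "intv k i \<inter> {1..T} \<noteq> {}"
  shows "(\<Sum>t\<in>intv k i \<inter> {1..T}. f t (E k i t) - f t (u t))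
     \<le> D * G * sqrt (2^k) / 2 + G * sqrt (2^k) * (\<Sum>t\<in>intv k i \<inter> {1..T}. norm (u (Suc t) - u t))
        + D * G * card (intv k i \<inter> {1..T}) / (2 * sqrt (2^k))"
proof -
  define s where "s = (i-1)*2^k+1"
  define e where "e = min (i*2^k) T"
  have A: "intv k i \<inter> {1..T} = {s..<e+1}" by (auto simp: intv_def s_def e_def)
  have se: "s \<le> e" using Ane unfolding A by simp
  define n where "n = e + 1 - s"
  have sn: "s + n = e + 1" using se by (simp add: n_def)
  have A2: "intv k i \<inter> {1..T} = {s..<s+n}" unfolding A sn ..
  have cardA: "card (intv k i \<inter> {1..T}) = n" unfolding A2 by simp
  have s1: "1 \<le> s" by (simp add: s_def)
  have snT: "s + n \<le> T + 1" using sn by (simp add: e_def)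
  have xs: "\<And>t. t \<in> {s..<s+n} \<Longrightarrow> E k i (Suc t) = ogd_step \<Omega> g D G k t (E k i t)"
    by (auto simp: s_def)
  define et where "et = eta D G k"
  have et0: "et > 0" using eta_pos by (simp add: et_def)
  have inv: "(\<Sum>t\<in>{s..<s+n}. g t (E k i t) \<bullet> (E k i t - u t))
     \<le> ((norm (E k i s - u s))\<^sup>2 - (norm (E k i (s+n) - u (s+n)))\<^sup>2) / (2 * et)
        + (D / et) * (\<Sum>t\<in>{s..<s+n}. norm (u (Suc t) - u t))
        + et / 2 * (\<Sum>t\<in>{s..<s+n}. (norm (g t (E k i t)))\<^sup>2)"
    unfolding et_def by (rule ogd_inv[OF s1 snT xs E_in])
  have rng: "\<And>t. t \<in> {s..<s+n} \<Longrightarrow> t \<in> {1..T}" using s1 snT by auto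
  have "(\<Sum>t\<in>{s..<s+n}. f t (E k i t) - f t (u t)) \<le> (\<Sum>t\<in>{s..<s+n}. g t (E k i t) \<bullet> (E k i t - u t))"
  proof (rule sum_mono)
    fix t assume t: "t \<in> {s..<s+n}"
    have "f t (u t) \<ge> f t (E k i t) + g t (E k i t) \<bullet> (u t - E k i t)"
      using subgrad rng[OF t] u E_in by auto
    moreover have "g t (E k i t) \<bullet> (u t - E k i t) = - (g t (E k i t) \<bullet> (E k i t - u t))"
      by (simp add: inner_diff_right)
    ultimately show "f t (E k i t) - f t (u t) \<le> g t (E k i t) \<bullet> (E k i t - u t)" by linarith
  qed
  also note inv
  also have "((norm (E k i s - u s))\<^sup>2 - (norm (E k i (s+n) - u (s+n)))\<^sup>2) / (2 * et) \<le> D\<^sup>2 / (2 * et)"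
  proof -
    have "norm (E k i s - u s) \<le> D" using diam E_in u s1 snT se sn by auto
    hence "(norm (E k i s - u s))\<^sup>2 \<le> D\<^sup>2" by (intro power_mono) auto
    hence "(norm (E k i s - u s))\<^sup>2 - (norm (E k i (s+n) - u (s+n)))\<^sup>2 \<le> D\<^sup>2" by (smt (verit) zero_le_power2)
    thus ?thesis using et0 by (intro divide_right_mono) auto
  qed
  also have "(\<Sum>t\<in>{s..<s+n}. (norm (g t (E k i t)))\<^sup>2) \<le> (\<Sum>t\<in>{s..<s+n}. G\<^sup>2)"
    using gbound rng E_in by (intro sum_mono power_mono) auto
  finally have B: "(\<Sum>t\<in>{s..<s+n}. f t (E k i t) - f t (u t))
      \<le> D\<^sup>2 / (2 * et) + (D / et) * (\<Sum>t\<in>{s..<s+n}. norm (u (Suc t) - u t)) + et / 2 * (n * G\<^sup>2)"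
    using et0 by (simp add: mult_left_mono)
  have sq: "sqrt (2^k) > 0" by simp
  have e1: "D\<^sup>2 / (2 * et) = D * G * sqrt (2^k) / 2" using DG sq by (simp add: et_def eta_def field_simps power2_eq_square)
  have e2: "D / et = G * sqrt (2^k)" using DG sq by (simp add: et_def eta_def field_simps)
  have e3: "et / 2 * (n * G\<^sup>2) = D * G * n / (2 * sqrt (2^k))" using DG sq by (simp add: et_def eta_def field_simps power2_eq_square)
  show ?thesis using B unfolding A2[symmetric] cardA e1 e2 e3 .
qed


lemma phi_char:
  assumes "1 \<le> t" "1 \<le> i" "0 < (M::nat)"
  shows "((t-1) div M + 1 = i) \<longleftrightarrow> ((i-1)*M + 1 \<le> t \<and> t \<le> i*M)"
proof
  assume h: "(t-1) div M + 1 = i"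
  have a: "(t-1) div M * M \<le> t - 1" by simp
  have b: "t - 1 < M + (t-1) div M * M" using dividend_less_div_times[OF assms(3)] by simp
  have q: "(t-1) div M = i - 1" using h by simp
  have a': "(i-1)*M \<le> t-1" using a unfolding q .
  have b': "t-1 < M + (i-1)*M" using b unfolding q .
  have "i * M = M + (i-1)*M" using assms(2) by (metis add.commute le_add_diff_inverse2 mult_Suc Suc_eq_plus1)
  thus "(i-1)*M + 1 \<le> t \<and> t \<le> i*M" using a' b' assms(1) by linarith
next
  assume h: "(i-1)*M + 1 \<le> t \<and> t \<le> i*M"
  have "i * M = M * Suc (i-1)" using assms(2) by simp
  hence "(t-1) div M = i - 1" using h by (intro div_nat_eqI) (auto simp: mult.commute)
  thus "(t-1) div M + 1 = i" using assms(2) by simp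
qed

lemma level_bound:
  assumes k: "2^k \<le> T"
  shows "\<exists>m::nat. m \<le> (T-1) div 2^k + 1 \<and>
    (\<Sum>t\<in>{1..T}. f t (W t)) - (\<Sum>t\<in>{1..T}. f t (u t))
      \<le> sqrt (3 * cT T * m * T) + m * D * G * sqrt (2^k) / 2
         + G * sqrt (2^k) * (\<Sum>t\<in>{1..T}. norm (u (Suc t) - u t)) + D * G * T / (2 * sqrt (2^k))"
proof -
  define M :: nat where "M = 2^k"
  have M0: "0 < M" by (simp add: M_def)
  define phi where "phi t = (t-1) div M + 1" for t
  define Ii where "Ii = phi ` {1..T}"
  define A where "A i = intv k i \<inter> {1..T}" for i
  have finIi: "finite Ii" by (simp add: Ii_def)
  have Ii1: "\<And>i. i \<in> Ii \<Longrightarrow> 1 \<le> i \<and> i \<le> T"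
  proof -
    fix i assume "i \<in> Ii"
    then obtain t where t: "t \<in> {1..T}" "i = phi t" by (auto simp: Ii_def)
    have d: "(t-1) div M \<le> t - 1" by (rule div_le_dividend)
    have "i = (t-1) div M + 1" using t by (simp add: phi_def)
    moreover have "1 \<le> t" "t \<le> T" using t by auto
    ultimately show "1 \<le> i \<and> i \<le> T" using d by linarith
  qed
  have Aeq: "\<And>i. i \<in> Ii \<Longrightarrow> {t \<in> {1..T}. phi t = i} = A i"
  proof -
    fix i assume i: "i \<in> Ii"
    have i1: "1 \<le> i" using Ii1[OF i] by simp
    have ch: "(phi t = i) = (t \<in> intv k i)" if t: "t \<in> {1..T}" for t
    proof -
      have "1 \<le> t" using t by simp
      from phi_char[OF this i1 M0] show ?thesis by (simp add: phi_def intv_def M_def)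
    qed
    show "{t \<in> {1..T}. phi t = i} = A i" using ch by (auto simp: A_def)
  qed
  have grp: "\<And>h::nat \<Rightarrow> real. (\<Sum>t\<in>{1..T}. h t) = (\<Sum>i\<in>Ii. \<Sum>t\<in>A i. h t)"
  proof -
    fix h :: "nat \<Rightarrow> real"
    have "(\<Sum>t\<in>{1..T}. h t) = (\<Sum>i\<in>Ii. \<Sum>t\<in>{t \<in> {1..T}. phi t = i}. h t)"
      unfolding Ii_def by (rule sum.image_gen) simp
    also have "\<dots> = (\<Sum>i\<in>Ii. \<Sum>t\<in>A i. h t)" using Aeq by (intro sum.cong) auto
    finally show "(\<Sum>t\<in>{1..T}. h t) = (\<Sum>i\<in>Ii. \<Sum>t\<in>A i. h t)" .
  qed
  have Ane: "\<And>i. i \<in> Ii \<Longrightarrow> A i \<noteq> {}"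
  proof -
    fix i assume i: "i \<in> Ii"
    then obtain t where t: "t \<in> {1..T}" "i = phi t" by (auto simp: Ii_def)
    hence "t \<in> {t \<in> {1..T}. phi t = i}" by simp
    thus "A i \<noteq> {}" using Aeq[OF i] by auto
  qed
  have inS: "\<And>i. i \<in> Ii \<Longrightarrow> (k, i) \<in> S" using Ii1 k by (auto simp: S_def)
  define c where "c = cT T"
  define P where "P = (\<Sum>t\<in>{1..T}. norm (u (Suc t) - u t))"
  define L where "L i = real (card (A i))" for i
  have sumL: "(\<Sum>i\<in>Ii. L i) = T" using grp[of "\<lambda>_. 1"] by (simp add: L_def)
  have sumP: "(\<Sum>i\<in>Ii. \<Sum>t\<in>A i. norm (u (Suc t) - u t)) = P" using grp by (simp add: P_def)
  have RReq: "\<And>i. RR (k,i) T = (\<Sum>t\<in>A i. f t (W t) - f t (E k i t))"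
    unfolding RR_def rr_def A_def by (simp add: sum.inter_restrict[symmetric] Int_commute if_distrib)
  have "(\<Sum>t\<in>{1..T}. f t (W t)) - (\<Sum>t\<in>{1..T}. f t (u t)) = (\<Sum>t\<in>{1..T}. f t (W t) - f t (u t))"
    by (simp add: sum_subtractf)
  also have "\<dots> = (\<Sum>i\<in>Ii. \<Sum>t\<in>A i. f t (W t) - f t (u t))" by (rule grp)
  also have "\<dots> = (\<Sum>i\<in>Ii. RR (k,i) T + (\<Sum>t\<in>A i. f t (E k i t) - f t (u t)))"
    unfolding RReq by (intro sum.cong) (auto simp: sum.distrib[symmetric])
  also have "\<dots> \<le> (\<Sum>i\<in>Ii. sqrt (3 * c * L i) + (D * G * sqrt (2^k) / 2 + G * sqrt (2^k) * (\<Sum>t\<in>A i. norm (u (Suc t) - u t))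
        + D * G * L i / (2 * sqrt (2^k))))"
  proof (rule sum_mono)
    fix i assume i: "i \<in> Ii"
    have "RR (k,i) T \<le> sqrt (3 * card (intv k i \<inter> {1..T}) * cT T)" using meta_bound[OF inS[OF i]] by simp
    hence m: "RR (k,i) T \<le> sqrt (3 * c * L i)" by (simp add: L_def A_def c_def ac_simps)
    have e: "(\<Sum>t\<in>A i. f t (E k i t) - f t (u t)) \<le> D * G * sqrt (2^k) / 2 + G * sqrt (2^k) * (\<Sum>t\<in>A i. norm (u (Suc t) - u t))
        + D * G * L i / (2 * sqrt (2^k))"
      using expert_regret[OF k _ Ane[unfolded A_def, OF i]] Ii1[OF i] by (simp add: A_def L_def)
    show "RR (k,i) T + (\<Sum>t\<in>A i. f t (E k i t) - f t (u t)) \<le> sqrt (3 * c * L i) + (D * G * sqrt (2^k) / 2 + G * sqrt (2^k) * (\<Sum>t\<in>A i. norm (u (Suc t) - u t))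
        + D * G * L i / (2 * sqrt (2^k)))" using m e by linarith
  qed
  also have "\<dots> = (\<Sum>i\<in>Ii. sqrt (3 * c * L i)) + card Ii * D * G * sqrt (2^k) / 2 + G * sqrt (2^k) * P + D * G * T / (2 * sqrt (2^k))"
  proof -
    have "(\<Sum>i\<in>Ii. D * G * L i / (2 * sqrt (2^k))) = D * G * (\<Sum>i\<in>Ii. L i) / (2 * sqrt (2^k))"
      by (simp add: sum_divide_distrib[symmetric] sum_distrib_left[symmetric])
    moreover have "(\<Sum>i\<in>Ii. G * sqrt (2^k) * (\<Sum>t\<in>A i. norm (u (Suc t) - u t))) = G * sqrt (2^k) * P"
      by (simp add: sum_distrib_left[symmetric] sumP)
    ultimately show ?thesis by (simp add: sum.distrib sumL)
  qed
  also have "(\<Sum>i\<in>Ii. sqrt (3 * c * L i)) \<le> sqrt (3 * c * card Ii * T)"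
  proof (rule real_le_rsqrt)
    have "(\<Sum>i\<in>Ii. sqrt (3 * c * L i))\<^sup>2 \<le> (\<Sum>i\<in>Ii. (sqrt (3 * c * L i))\<^sup>2) * card Ii"
      by (rule sum_squared_le_sum_of_squares)
    also have "(\<Sum>i\<in>Ii. (sqrt (3 * c * L i))\<^sup>2) = (\<Sum>i\<in>Ii. 3 * c * L i)"
      using cT_nonneg by (intro sum.cong) (auto simp: c_def L_def)
    also have "\<dots> = 3 * c * T" by (simp add: sum_distrib_left[symmetric] sumL)
    finally show "(\<Sum>i\<in>Ii. sqrt (3 * c * L i))\<^sup>2 \<le> 3 * c * card Ii * T" by (simp add: ac_simps)
  qed
  finally have fin: "(\<Sum>t\<in>{1..T}. f t (W t)) - (\<Sum>t\<in>{1..T}. f t (u t))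
      \<le> sqrt (3 * c * card Ii * T) + card Ii * D * G * sqrt (2^k) / 2 + G * sqrt (2^k) * P + D * G * T / (2 * sqrt (2^k))"
    by simp
  have "Ii \<subseteq> {1..(T-1) div M + 1}"
  proof
    fix i assume "i \<in> Ii"
    then obtain t where t: "t \<in> {1..T}" "i = phi t" by (auto simp: Ii_def)
    have "(t-1) div M \<le> (T-1) div M" using t by (intro div_le_mono) auto
    thus "i \<in> {1..(T-1) div M + 1}" using t by (simp add: phi_def)
  qed
  hence "card Ii \<le> (T-1) div M + 1" using card_mono[of "{1..(T-1) div M + 1}" Ii] by simp
  thus ?thesis using fin unfolding c_def P_def M_def by blast
qed


theorem main:
  "(\<Sum>t=1..T. f t (W t)) - (\<Sum>t=1..T. f t (u t))
         \<le> (3 * D * G / 2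
             + 5 * G / 2 * sqrt (D * (\<Sum>t=1..T. norm (u (t + 1) - u t)))
             + sqrt (6 * cT T * (1 + 2 * (\<Sum>t=1..T. norm (u (t + 1) - u t)) / D)))
           * sqrt (real T)"
proof -
  define P where "P = (\<Sum>t\<in>{1..T}. norm (u (Suc t) - u t))"
  have P0: "P \<ge> 0" by (simp add: P_def sum_nonneg)
  have PT: "P \<le> T * D"
  proof -
    have "P \<le> (\<Sum>t\<in>{1..T}. D)" unfolding P_def using diam u by (intro sum_mono) auto
    thus ?thesis by simp
  qed
  define K where "K k \<longleftrightarrow> 2^k \<le> T \<and> real (2^k) * P \<le> 2 * T * D" for k
  have TD0: "0 \<le> real T * D" using DG by simp
  have "2 * real T * D = real T * D + real T * D" by simp
  hence K0: "K 0" using T PT TD0 by (simp add: K_def)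
  have Kb: "\<And>y. K y \<Longrightarrow> y \<le> T"
  proof -
    fix y assume "K y"
    hence "2^y \<le> T" by (simp add: K_def)
    moreover have "y < 2^y" by (rule less_exp)
    ultimately show "y \<le> T" by linarith
  qed
  define k where "k = Greatest K"
  have Kk: "K k" unfolding k_def by (rule GreatestI_nat[of K 0 T, OF K0 Kb])
  have notK: "\<not> K (Suc k)"
  proof
    assume "K (Suc k)"
    hence "Suc k \<le> Greatest K" by (rule Greatest_le_nat[of K "Suc k" T, OF _ Kb])
    thus False by (simp add: k_def)
  qed
  define M :: nat where "M = 2^k"
  have M1: "1 \<le> M" by (simp add: M_def)
  have MT: "M \<le> T" and MP: "real M * P \<le> 2 * T * D" using Kk by (auto simp: K_def M_def)
  obtain m where m: "m \<le> (T-1) div 2^k + 1"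
    and lb: "(\<Sum>t\<in>{1..T}. f t (W t)) - (\<Sum>t\<in>{1..T}. f t (u t))
      \<le> sqrt (3 * cT T * m * T) + m * D * G * sqrt (2^k) / 2
         + G * sqrt (2^k) * (\<Sum>t\<in>{1..T}. norm (u (Suc t) - u t)) + D * G * T / (2 * sqrt (2^k))"
    using level_bound[of k] Kk by (auto simp: K_def)
  define s where "s = sqrt (real M)"
  define tt where "tt = sqrt (real T)"
  have s2: "s\<^sup>2 = real M" by (simp add: s_def)
  have t2: "tt\<^sup>2 = real T" by (simp add: tt_def)
  have sk: "sqrt (2^k) = s" by (simp add: s_def M_def)
  have s1: "1 \<le> s" using M1 by (simp add: s_def)
  have stt: "s \<le> tt" using MT by (simp add: s_def tt_def)
  have hm: "real m * s\<^sup>2 < tt\<^sup>2 + s\<^sup>2"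
  proof -
    have "m * M \<le> ((T-1) div M + 1) * M" using m unfolding M_def by (rule mult_right_mono) simp
    also have "\<dots> = (T-1) div M * M + M" by simp
    also have "(T-1) div M * M \<le> T - 1" by simp
    finally have "m * M < T + M" using T by linarith
    hence "real (m * M) < real (T + M)" by linarith
    thus ?thesis unfolding s2 t2 by simp
  qed
  have hcase: "(tt\<^sup>2 < 2 * s\<^sup>2 \<and> real m \<le> 2) \<or> tt\<^sup>2 * D < s\<^sup>2 * P"
  proof (cases "2 * M \<le> T")
    case False
    hence TM: "T - 1 < 2 * M" by simp
    have "(T-1) div M < 2" using less_mult_imp_div_less[of "T-1" 2 M] TM by (simp add: mult.commute)
    hence "m \<le> 2" using m by (simp add: M_def)
    moreover have "real T < 2 * real M" using False by simp
    ultimately show ?thesis unfolding s2 t2 by simp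
  next
    case True
    hence "\<not> (real (2 * M) * P \<le> 2 * T * D)" using notK by (simp add: K_def M_def)
    hence "2 * T * D < 2 * (real M * P)" by simp
    hence "T * D < real M * P" by simp
    thus ?thesis unfolding s2 t2 by simp
  qed
  have fa: "sqrt (3 * cT T * m * tt\<^sup>2) + m * D * G * s / 2 + G * s * P + D * G * tt\<^sup>2 / (2 * s)
         \<le> (3 * D * G / 2 + 5 * G / 2 * sqrt (D * P) + sqrt (6 * cT T * (1 + 2 * P / D))) * tt"
    by (rule final_arith[OF s1 stt DG(1) DG(2) cT_nonneg P0 _ _ hm hcase])
      (use MP in \<open>simp_all add: s2 t2\<close>)
  have PP: "(\<Sum>t=1..T. norm (u (t + 1) - u t)) = P" by (simp add: P_def)
  show ?thesis unfolding PP using lb fa unfolding sk t2 tt_def[symmetric] P_def[symmetric] by linarith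
qed

end

theorem theorem4:
  fixes \<Omega> :: "'a::euclidean_space set"
    and f :: "nat \<Rightarrow> 'a \<Rightarrow> real"
    and g :: "nat \<Rightarrow> 'a \<Rightarrow> 'a"
    and D G :: real and T :: nat
    and init :: "nat \<Rightarrow> 'a"
    and u :: "nat \<Rightarrow> 'a"
  assumes T: "T \<ge> 1"
    and DG: "D > 0" "G > 0"
    and cvx: "convex \<Omega>" and cl: "closed \<Omega>"
    and zero: "0 \<in> \<Omega>"
    and diam: "\<forall>w\<in>\<Omega>. \<forall>w'\<in>\<Omega>. norm (w - w') \<le> D"
    and fconv: "\<forall>t\<in>{1..T}. convex_on \<Omega> (f t)"
    and subgrad: "\<forall>t\<in>{1..T}. \<forall>w\<in>\<Omega>. \<forall>v\<in>\<Omega>. f t v \<ge> f t w + g t w \<bullet> (v - w)"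
    and gbound: "\<forall>t\<in>{1..T}. \<forall>w\<in>\<Omega>. norm (g t w) \<le> G"
    and frange: "\<forall>t\<in>{1..T}. \<forall>w\<in>\<Omega>. 0 \<le> f t w \<and> f t w \<le> 1"
    and init: "\<forall>k. init k \<in> \<Omega>"
    and u: "\<forall>t\<in>{1..T+1}. u t \<in> \<Omega>"
  shows "(\<Sum>t=1..T. f t (aod \<Omega> f g D G init T t)) - (\<Sum>t=1..T. f t (u t))
         \<le> (3 * D * G / 2
             + 5 * G / 2 * sqrt (D * (\<Sum>t=1..T. norm (u (t + 1) - u t)))
             + sqrt (6 * cT T * (1 + 2 * (\<Sum>t=1..T. norm (u (t + 1) - u t)) / D)))
           * sqrt (real T)"
proof -
  have L: "aodl \<Omega> f g D G T init u" unfolding aodl_def using assms by simp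
  show ?thesis by (rule aodl.main[OF L])
qed

end
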